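(* Let $M$ be a $k$-connected matroid on $E$, where $k\geq 2$ and $|E|\geq \max\{3k-5,2\}$. Then $M$ has a unique tangle $\mathcal T$ of order $k$. Moreover a subset $A$ of $E$ belongs to $\mathcal T$ if and only if $|A|\leq k-2$.
   Context: For a matroid $M$ on $E$ with rank function $r$, $\lambda_M(X)=r(X)+r(E-X)-r(M)+1$. For a positive integer $l$, an $l$-separation (in Tutte's sense) is a partition $(X,Y)$ of $E$ with $|X|,|Y|\ge l$ and $\lambda_M(X)\le l$; $M$ is $k$-connected if it has no $l$-separation for any $l<k$. A tangle of order $k$ in $M$ is a collection $\mathcal T$ of subsets of $E$ such that (T1) $\lambda_M(A)<k$ for all $A\in\mathcal T$; (T2) if $\lambda_M(A)\le k-1$ then $A\in\mathcal T$ or $E-A\in\mathcal T$; (T3) $A\cup B\cup C\ne E$ for all $A,B,C\in\mathcal T$; (T4) $E-\{e\}\notin\mathcal T$ for each $e\in E$. *)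

theory Defs
  imports Main
begin

definition matroid :: "'a set \<Rightarrow> ('a set \<Rightarrow> nat) \<Rightarrow> bool" where
  "matroid E r \<longleftrightarrow> finite E
     \<and> (\<forall>X. X \<subseteq> E \<longrightarrow> r X \<le> card X)
     \<and> (\<forall>X Y. X \<subseteq> Y \<and> Y \<subseteq> E \<longrightarrow> r X \<le> r Y)
     \<and> (\<forall>X Y. X \<subseteq> E \<and> Y \<subseteq> E \<longrightarrow> r (X \<union> Y) + r (X \<inter> Y) \<le> r X + r Y)"

definition conn :: "'a set \<Rightarrow> ('a set \<Rightarrow> nat) \<Rightarrow> 'a set \<Rightarrow> int" where
  "conn E r X = int (r X) + int (r (E - X)) - int (r E) + 1"

definition separation :: "'a set \<Rightarrow> ('a set \<Rightarrow> nat) \<Rightarrow> nat \<Rightarrow> 'a set \<Rightarrow> 'a set \<Rightarrow> bool" where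
  "separation E r l X Y \<longleftrightarrow> X \<union> Y = E \<and> X \<inter> Y = {}
     \<and> card X \<ge> l \<and> card Y \<ge> l \<and> conn E r X \<le> int l"

definition k_connected :: "'a set \<Rightarrow> ('a set \<Rightarrow> nat) \<Rightarrow> nat \<Rightarrow> bool" where
  "k_connected E r k \<longleftrightarrow> (\<forall>l X Y. 0 < l \<and> l < k \<longrightarrow> \<not> separation E r l X Y)"

definition tangle :: "'a set \<Rightarrow> ('a set \<Rightarrow> nat) \<Rightarrow> nat \<Rightarrow> 'a set set \<Rightarrow> bool" where
  "tangle E r k \<T> \<longleftrightarrow> \<T> \<subseteq> Pow E
     \<and> (\<forall>A\<in>\<T>. conn E r A < int k)
     \<and> (\<forall>A. A \<subseteq> E \<and> conn E r A \<le> int k - 1 \<longrightarrow> A \<in> \<T> \<or> E - A \<in> \<T>)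
     \<and> (\<forall>A\<in>\<T>. \<forall>B\<in>\<T>. \<forall>C\<in>\<T>. A \<union> B \<union> C \<noteq> E)
     \<and> (\<forall>e\<in>E. E - {e} \<notin> \<T>)"

end

theory Submission
  imports Defs
begin

lemma mfin: "matroid E r \<Longrightarrow> finite E" unfolding matroid_def by simp
lemma tsub: "tangle E r k T \<Longrightarrow> T \<subseteq> Pow E" unfolding tangle_def by simp
lemma tconn: "tangle E r k T \<Longrightarrow> A \<in> T \<Longrightarrow> conn E r A < int k" unfolding tangle_def by simp
lemma t2: "tangle E r k T \<Longrightarrow> A \<subseteq> E \<Longrightarrow> conn E r A \<le> int k - 1 \<Longrightarrow> A \<in> T \<or> E - A \<in> T"
  unfolding tangle_def by simp
lemma t3: "tangle E r k T \<Longrightarrow> A \<in> T \<Longrightarrow> B \<in> T \<Longrightarrow> C \<in> T \<Longrightarrow> A \<union> B \<union> C \<noteq> E"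
  unfolding tangle_def by simp
lemma t4: "tangle E r k T \<Longrightarrow> e \<in> E \<Longrightarrow> E - {e} \<notin> T"
  unfolding tangle_def by simp

lemma conn_le:
  assumes "matroid E r" "A \<subseteq> E"
  shows "conn E r A \<le> int (card A) + 1"
proof -
  have "r A \<le> card A" using assms unfolding matroid_def by simp
  moreover have "r (E - A) \<le> r E" using assms unfolding matroid_def by (meson Diff_subset order_refl)
  ultimately show ?thesis unfolding conn_def by linarith
qed

lemma sep_small:
  assumes "k_connected E r k" "k \<ge> 2" "A \<subseteq> E" "conn E r A \<le> int k - 1"
  shows "card A \<le> k - 2 \<or> card (E - A) \<le> k - 2"
proof (rule ccontr)
  assume "\<not> ?thesis"
  hence "card A \<ge> k - 1" "card (E - A) \<ge> k - 1" by auto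
  moreover have "int (k - 1) = int k - 1" using assms(2) by simp
  ultimately have "separation E r (k - 1) A (E - A)"
    using assms unfolding separation_def by auto
  moreover have "0 < k - 1" "k - 1 < k" using assms(2) by auto
  ultimately show False using assms(1) unfolding k_connected_def by auto
qed

lemma small_in:
  assumes m: "matroid E r" and t: "tangle E r k T" and kc: "k_connected E r k" and k2: "k \<ge> 2"
  shows "A \<subseteq> E \<Longrightarrow> card A \<le> k - 2 \<Longrightarrow> A \<in> T"
proof -
  have fin: "finite E" using mfin[OF m] .
  assume AE: "A \<subseteq> E"
  hence "finite A" using fin finite_subset by blast
  thus "A \<subseteq> E \<Longrightarrow> card A \<le> k - 2 \<Longrightarrow> A \<in> T"
  proof (induction A rule: finite_induct)
    case empty
    have "conn E r {} \<le> int k - 1" using conn_le[OF m, of "{}"] k2 by simp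
    hence "{} \<in> T \<or> E - {} \<in> T" using t2[OF t] by blast
    moreover have "E \<notin> T" using t3[OF t, of E E E] by blast
    ultimately show ?case by simp
  next
    case (insert e F)
    have FT: "F \<in> T" using insert by auto
    have k3: "k \<ge> 3" using insert by simp
    have eE: "e \<in> E" using insert by auto
    have "conn E r {e} \<le> int k - 1" using conn_le[OF m, of "{e}"] eE k3 by simp
    hence "{e} \<in> T \<or> E - {e} \<in> T" using t2[OF t, of "{e}"] eE by blast
    hence eT: "{e} \<in> T" using t4[OF t eE] by blast
    have "conn E r (insert e F) \<le> int k - 1"
      using conn_le[OF m insert(4)] insert(5) k3 by linarith
    hence "insert e F \<in> T \<or> E - insert e F \<in> T" using t2[OF t insert(4)] by blast
    moreover have "F \<union> {e} \<union> (E - insert e F) = E" using insert(4) by auto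
    hence "E - insert e F \<notin> T" using t3[OF t FT eT] by metis
    ultimately show ?case by blast
  qed
qed

lemma char:
  assumes m: "matroid E r" and t: "tangle E r k T" and kc: "k_connected E r k" and k2: "k \<ge> 2"
    and AE: "A \<subseteq> E"
  shows "A \<in> T \<longleftrightarrow> card A \<le> k - 2"
proof
  assume AT: "A \<in> T"
  show "card A \<le> k - 2"
  proof (rule ccontr)
    assume c: "\<not> card A \<le> k - 2"
    have "conn E r A \<le> int k - 1" using tconn[OF t AT] by linarith
    hence "card (E - A) \<le> k - 2" using sep_small[OF kc k2 AE] c by blast
    hence "E - A \<in> T" using small_in[OF m t kc k2, of "E - A"] by blast
    moreover have "A \<union> (E - A) \<union> (E - A) = E" using AE by auto
    ultimately show False using t3[OF t AT, of "E - A" "E - A"] by blast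
  qed
next
  assume "card A \<le> k - 2"
  thus "A \<in> T" using small_in[OF m t kc k2 AE] by blast
qed

theorem corollary2p4:
  fixes E :: "'a set" and r :: "'a set \<Rightarrow> nat" and k :: nat
  assumes "matroid E r"
    and "k_connected E r k"
    and "k \<ge> 2"
    and "card E \<ge> max (3 * k - 5) 2"
  shows "(\<exists>!\<T>. tangle E r k \<T>)
    \<and> (\<forall>\<T>. tangle E r k \<T> \<longrightarrow> (\<forall>A. A \<subseteq> E \<longrightarrow> (A \<in> \<T> \<longleftrightarrow> card A \<le> k - 2)))"
proof -
  note m = assms(1) and kc = assms(2) and k2 = assms(3)
  have fin: "finite E" using mfin[OF m] .
  define T0 where "T0 = {A. A \<subseteq> E \<and> card A \<le> k - 2}"
  have "tangle E r k T0"
    unfolding tangle_def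
  proof (intro conjI ballI allI impI)
    show "T0 \<subseteq> Pow E" unfolding T0_def by auto
  next
    fix A assume "A \<in> T0"
    thus "conn E r A < int k" using conn_le[OF m, of A] k2 unfolding T0_def by auto
  next
    fix A assume "A \<subseteq> E \<and> conn E r A \<le> int k - 1"
    thus "A \<in> T0 \<or> E - A \<in> T0" using sep_small[OF kc k2, of A] unfolding T0_def by auto
  next
    fix A B C assume "A \<in> T0" "B \<in> T0" "C \<in> T0"
    hence fA: "finite A" "finite B" "finite C" "card A \<le> k - 2" "card B \<le> k - 2" "card C \<le> k - 2"
      using fin finite_subset unfolding T0_def by auto
    have "card (A \<union> B \<union> C) \<le> card A + card B + card C"
      using card_Un_le[of "A \<union> B" C] card_Un_le[of A B] by linarith
    hence "card (A \<union> B \<union> C) < card E" using fA assms(4) k2 by linarith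
    thus "A \<union> B \<union> C \<noteq> E" by auto
  next
    fix e assume eE: "e \<in> E"
    have "card (E - {e}) = card E - 1" using eE fin by simp
    hence "card (E - {e}) > k - 2" using assms(4) k2 by linarith
    thus "E - {e} \<notin> T0" unfolding T0_def by auto
  qed
  moreover have ch: "\<forall>\<T>. tangle E r k \<T> \<longrightarrow> (\<forall>A. A \<subseteq> E \<longrightarrow> (A \<in> \<T> \<longleftrightarrow> card A \<le> k - 2))"
    using char[OF m _ kc k2] by blast
  moreover have "\<And>T. tangle E r k T \<Longrightarrow> T = T0"
  proof -
    fix T assume tT: "tangle E r k T"
    hence "T \<subseteq> Pow E" by (rule tsub)
    thus "T = T0" using ch tT unfolding T0_def by blast
  qed
  ultimately show ?thesis by blast
qed

end
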